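(* For $\boldsymbol\alpha\in\mathbb C^{n+1}$ with $\alpha_1^2+\cdots+\alpha_{n+1}^2=0$, integers $\ell\ge1$ and $k=1,\dots,n+1$, $$\mathbf A_k(\boldsymbol\alpha\cdot\mathbf x)^\ell=\hbar\,\ell\,\Big(\frac{2(\ell-1)+n-1}{2\ell+n-1}\Big)^{1/2}\alpha_k\,(\boldsymbol\alpha\cdot\mathbf x)^{\ell-1},$$ where $(\boldsymbol\alpha\cdot\mathbf x)=\sum_j\alpha_jx_j$ is regarded as a function on $S^n$; and $\mathbf A_k$ annihilates constants. Consequently $\mathbf A_k$ maps the space $\mathcal V_\ell$ of spherical harmonics of degree $\ell$ into $\mathcal V_{\ell-1}$ for $\ell>0$ and $\mathbf A_k\mathcal V_0=0$.
   Context: $n\in\{2,3,5\}$, $\hbar>0$. $\mathcal V_\ell$ is the space of restrictions to $S^n$ of harmonic homogeneous polynomials of degree $\ell$ on $\mathbb R^{n+1}$. $\Delta_{S^n}$ is the normalized spherical Laplacian on $L^2(S^n)$, the self-adjoint operator acting on $\mathcal V_k$ by the scalar $(k+\frac{n-1}{2})^2$. Define by functional calculus $\mathbf M=\sqrt{\tfrac{2}{n-1}}\,\Delta_{S^n}^{1/4}$ and $\mathbf N=\hbar(\sqrt{\Delta_{S^n}}-\tfrac{n-1}{2})$. Let $\tilde{\mathbf L}_{kj}$ be the restriction to $S^n$ of the angular momentum vector field $y_k\partial_{y_j}-y_j\partial_{y_k}$ on $\mathbb R^{n+1}$, and let $\mathbf E_k=\sum_{j=1}^{n+1}(-i x_j)(-i\hbar\tilde{\mathbf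 L}_{kj})+x_k\mathbf N$, where $x_j$ denotes multiplication by the $j$-th coordinate on $S^n$. Set $\mathbf A_k=\mathbf M\mathbf E_k\mathbf M^{-1}$. *)

theory Defs
  imports "HOL-Analysis.Analysis"
begin

text \<open>Points of R^(n+1) are vectors real^'m with CARD('m) = n+1.
 Functions on S^n are represented as functions real^'m => complex; only their
 values on the unit sphere matter.  Elements of the spaces V_l are normalised
 to vanish off the sphere so that harmonic decompositions are unique.\<close>

definition dimS :: "'m::finite itself \<Rightarrow> real" where
  "dimS _ = real CARD('m) - 1"

definition restr :: "(real^'m \<Rightarrow> complex) \<Rightarrow> real^'m \<Rightarrow> complex" where
  "restr p = (\<lambda>y. if norm y = 1 then p y else 0)"

definition homog_poly :: "nat \<Rightarrow> (real^'m \<Rightarrow> complex) \<Rightarrow> bool" where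
  "homog_poly l p \<longleftrightarrow> (\<exists>c :: ('m \<Rightarrow> nat) \<Rightarrow> complex.
      \<forall>y. p y = (\<Sum>m\<in>{m. sum m UNIV = l}. c m * (\<Prod>i\<in>UNIV. complex_of_real ((y$i) ^ m i))))"

definition second_partial :: "(real^'m \<Rightarrow> complex) \<Rightarrow> 'm \<Rightarrow> real^'m \<Rightarrow> complex" where
  "second_partial p i y =
     vector_derivative (\<lambda>s. vector_derivative (\<lambda>t. p (y + t *\<^sub>R axis i 1)) (at s)) (at 0)"

definition laplacian :: "(real^'m \<Rightarrow> complex) \<Rightarrow> real^'m \<Rightarrow> complex" where
  "laplacian p y = (\<Sum>i\<in>UNIV. second_partial p i y)"

definition harmonic_homog :: "nat \<Rightarrow> (real^'m \<Rightarrow> complex) \<Rightarrow> bool" where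
  "harmonic_homog l p \<longleftrightarrow> homog_poly l p \<and> (\<forall>y. laplacian p y = 0)"

definition SH :: "nat \<Rightarrow> (real^'m \<Rightarrow> complex) set" where
  "SH l = {restr p | p. harmonic_homog l p}"

definition is_harm_decomp :: "(real^'m \<Rightarrow> complex) \<Rightarrow> (nat \<Rightarrow> real^'m \<Rightarrow> complex) \<Rightarrow> bool" where
  "is_harm_decomp f c \<longleftrightarrow> (\<forall>k. c k \<in> SH k) \<and> finite {k. c k \<noteq> (\<lambda>_. 0)} \<and>
     (\<forall>y. norm y = 1 \<longrightarrow> f y = (\<Sum>k\<in>{k. c k \<noteq> (\<lambda>_. 0)}. c k y))"

definition harm_comp :: "(real^'m \<Rightarrow> complex) \<Rightarrow> nat \<Rightarrow> real^'m \<Rightarrow> complex" where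
  "harm_comp f = (THE c. is_harm_decomp f c)"

text \<open>Functional calculus of the normalised spherical Laplacian, which acts on V_k
  by the scalar (k + (n-1)/2)^2; phi(Delta) acts on V_k by phi((k+(n-1)/2)^2).\<close>
definition fcalc :: "(real \<Rightarrow> complex) \<Rightarrow> (real^'m \<Rightarrow> complex) \<Rightarrow> real^'m \<Rightarrow> complex" where
  "fcalc phi f = (\<lambda>y. \<Sum>k\<in>{k. harm_comp f k \<noteq> (\<lambda>_. 0)}.
      phi ((real k + (dimS TYPE('m) - 1) / 2)\<^sup>2) * harm_comp f k y)"

definition opM :: "(real^'m \<Rightarrow> complex) \<Rightarrow> real^'m \<Rightarrow> complex" where
  "opM = fcalc (\<lambda>lam. complex_of_real (sqrt (2 / (dimS TYPE('m) - 1)) * lam powr (1/4)))"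

definition opMinv :: "(real^'m \<Rightarrow> complex) \<Rightarrow> real^'m \<Rightarrow> complex" where
  "opMinv = fcalc (\<lambda>lam. complex_of_real (1 / (sqrt (2 / (dimS TYPE('m) - 1)) * lam powr (1/4))))"

definition opN :: "real \<Rightarrow> (real^'m \<Rightarrow> complex) \<Rightarrow> real^'m \<Rightarrow> complex" where
  "opN hbar = fcalc (\<lambda>lam. complex_of_real (hbar * (sqrt lam - (dimS TYPE('m) - 1) / 2)))"

text \<open>Restriction to the sphere of the vector field y_k d/dy_j - y_j d/dy_k, acting on
  a function on the sphere (differentiate its 0-homogeneous extension along the field).\<close>
definition Ltil :: "'m \<Rightarrow> 'm \<Rightarrow> (real^'m \<Rightarrow> complex) \<Rightarrow> real^'m \<Rightarrow> complex" where
  "Ltil k j f y =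
     (let v = (\<chi> i. (if i = j then y$k else 0) - (if i = k then y$j else 0)) :: real^'m
      in vector_derivative (\<lambda>t. f ((1 / norm (y + t *\<^sub>R v)) *\<^sub>R (y + t *\<^sub>R v))) (at 0))"

definition opE :: "real \<Rightarrow> 'm \<Rightarrow> (real^'m \<Rightarrow> complex) \<Rightarrow> real^'m \<Rightarrow> complex" where
  "opE hbar k f = (\<lambda>y. (\<Sum>j\<in>UNIV. (- \<i> * complex_of_real (y$j)) *
        (- \<i> * complex_of_real hbar * Ltil k j f y))
      + complex_of_real (y$k) * opN hbar f y)"

definition opA :: "real \<Rightarrow> 'm \<Rightarrow> (real^'m \<Rightarrow> complex) \<Rightarrow> real^'m \<Rightarrow> complex" where
  "opA hbar k f = opM (opE hbar k (opMinv f))"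

end

theory Submission
  imports Defs
begin


definition mono :: "('m::finite \<Rightarrow> nat) \<Rightarrow> real^'m \<Rightarrow> complex" where
  "mono m y = (\<Prod>i\<in>UNIV. complex_of_real ((y$i) ^ m i))"

definition ev :: "(complex \<times> ('m::finite \<Rightarrow> nat)) list \<Rightarrow> real^'m \<Rightarrow> complex" where
  "ev L y = (\<Sum>(c,m)\<leftarrow>L. c * mono m y)"

definition dL :: "'m::finite \<Rightarrow> (complex \<times> ('m \<Rightarrow> nat)) list \<Rightarrow> (complex \<times> ('m \<Rightarrow> nat)) list" where
  "dL i L = concat (map (\<lambda>(c,m). if m i = 0 then [] else [(c * of_nat (m i), m(i := m i - 1))]) L)"

lemma ev_Nil[simp]: "ev [] y = 0" by (simp add: ev_def)
lemma ev_Cons[simp]: "ev ((c,m)#L) y = c * mono m y + ev L y" by (simp add: ev_def)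
lemma ev_append[simp]: "ev (A @ B) y = ev A y + ev B y" by (simp add: ev_def)
lemma dL_Nil[simp]: "dL i [] = []" by (simp add: dL_def)
lemma dL_Cons[simp]: "dL i ((c,m)#L) = (if m i = 0 then [] else [(c * of_nat (m i), m(i := m i - 1))]) @ dL i L"
  by (simp add: dL_def)
lemma dL_append[simp]: "dL i (A @ B) = dL i A @ dL i B" by (simp add: dL_def)

lemma mono_deriv:
  "(mono m has_derivative (\<lambda>h. \<Sum>i\<in>UNIV. complex_of_real (h$i) * ev (dL i [(1,m)]) y)) (at y)"
proof -
  have d: "((\<lambda>y. complex_of_real ((y$i) ^ m i)) has_derivative
      (\<lambda>h. complex_of_real (real (m i) * (y$i) ^ (m i - 1) * h$i))) (at y)" for i
    by (auto intro!: derivative_eq_intros bounded_linear_imp_has_derivative bounded_linear_vec_nth)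
  have D: "(mono m has_derivative (\<lambda>h. \<Sum>i\<in>UNIV. complex_of_real (real (m i) * (y$i) ^ (m i - 1) * h$i)
      * (\<Prod>j\<in>UNIV - {i}. complex_of_real ((y$j) ^ m j)))) (at y)"
    unfolding mono_def[abs_def] by (rule has_derivative_prod, rule d)
  have e: "complex_of_real (real (m i) * (y$i) ^ (m i - 1) * h$i)
      * (\<Prod>j\<in>UNIV - {i}. complex_of_real ((y$j) ^ m j)) = complex_of_real (h$i) * ev (dL i [(1,m)]) y" for i h
  proof (cases "m i = 0")
    case True then show ?thesis by simp
  next
    case False
    have "mono (m(i := m i - 1)) y = complex_of_real ((y$i)^(m i - 1)) * (\<Prod>j\<in>UNIV - {i}. complex_of_real ((y$j) ^ m j))"
      unfolding mono_def by (subst prod.remove[of UNIV i]) (auto intro!: prod.cong)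
    then show ?thesis using False by simp
  qed
  show ?thesis using D unfolding e .
qed
lemma ev_dL_single: "ev (dL i [(c,m)]) y = c * ev (dL i [(1,m)]) y"
  by simp

lemma ev_deriv:
  "(ev L has_derivative (\<lambda>h. \<Sum>i\<in>UNIV. complex_of_real (h$i) * ev (dL i L) y)) (at y)"
proof (induction L)
  case Nil
  then show ?case by (simp add: ev_def[abs_def])
next
  case (Cons a L)
  obtain c m where a: "a = (c,m)" by fastforce
  have e: "ev (a#L) = (\<lambda>y. c * mono m y + ev L y)" using a by (simp add: fun_eq_iff)
  have "((\<lambda>y. c * mono m y + ev L y) has_derivative
     (\<lambda>h. c * (\<Sum>i\<in>UNIV. complex_of_real (h$i) * ev (dL i [(1,m)]) y) +
          (\<Sum>i\<in>UNIV. complex_of_real (h$i) * ev (dL i L) y))) (at y)"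
    by (intro has_derivative_add has_derivative_mult_right mono_deriv Cons.IH)
  moreover have "(\<lambda>h. c * (\<Sum>i\<in>UNIV. complex_of_real (h$i) * ev (dL i [(1,m)]) y) +
          (\<Sum>i\<in>UNIV. complex_of_real (h$i) * ev (dL i L) y)) =
     (\<lambda>h. \<Sum>i\<in>UNIV. complex_of_real (h$i) * ev (dL i (a#L)) y)"
    by (auto simp: a sum_distrib_left sum.distrib[symmetric] algebra_simps intro!: ext sum.cong)
  ultimately show ?case by (simp add: e)
qed

lemma ev_line:
  "((\<lambda>t. ev L (y + t *\<^sub>R axis i 1)) has_vector_derivative ev (dL i L) (y + s *\<^sub>R axis i 1)) (at s)"
proof -
  have l: "((\<lambda>t. y + t *\<^sub>R axis i 1) has_derivative (\<lambda>h. h *\<^sub>R axis i 1)) (at s)"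
    by (auto intro!: derivative_eq_intros)
  have "((\<lambda>t. ev L (y + t *\<^sub>R axis i 1)) has_derivative
     (\<lambda>h. \<Sum>j\<in>UNIV. complex_of_real ((h *\<^sub>R axis i (1::real))$j) * ev (dL j L) (y + s *\<^sub>R axis i 1))) (at s)"
    using has_derivative_compose[OF l ev_deriv] by simp
  moreover have "(\<lambda>h. \<Sum>j\<in>UNIV. complex_of_real ((h *\<^sub>R axis i (1::real))$j) * ev (dL j L) (y + s *\<^sub>R axis i 1))
     = (\<lambda>h. h *\<^sub>R ev (dL i L) (y + s *\<^sub>R axis i 1))"
  proof
    fix h :: real
    have "complex_of_real ((h *\<^sub>R axis i (1::real))$j) * ev (dL j L) (y + s *\<^sub>R axis i 1) =
       (if j = i then complex_of_real h * ev (dL j L) (y + s *\<^sub>R axis i 1) else 0)" for j by (simp add: axis_def)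
    moreover have "h *\<^sub>R z = complex_of_real h * z" for z :: complex by (simp add: scaleR_conv_of_real)
    ultimately show "(\<Sum>j\<in>UNIV. complex_of_real ((h *\<^sub>R axis i (1::real))$j) * ev (dL j L) (y + s *\<^sub>R axis i 1))
      = h *\<^sub>R ev (dL i L) (y + s *\<^sub>R axis i 1)"
      by (simp only:) simp
  qed
  ultimately show ?thesis unfolding has_vector_derivative_def by simp
qed

definition pd :: "(real^'m \<Rightarrow> complex) \<Rightarrow> 'm \<Rightarrow> real^'m \<Rightarrow> complex" where
  "pd f i y = vector_derivative (\<lambda>t. f (y + t *\<^sub>R axis i 1)) (at 0)"

lemma pd_ev: "pd (ev L) i y = ev (dL i L) y"
  unfolding pd_def using vector_derivative_at[OF ev_line[of L y i 0]] by simp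

lemma second_partial_ev: "second_partial (ev L) i y = ev (dL i (dL i L)) y"
proof -
  have "vector_derivative (\<lambda>t. ev L (y + t *\<^sub>R axis i 1)) (at s) = ev (dL i L) (y + s *\<^sub>R axis i 1)" for s
    by (rule vector_derivative_at[OF ev_line])
  then have "second_partial (ev L) i y = vector_derivative (\<lambda>s. ev (dL i L) (y + s *\<^sub>R axis i 1)) (at 0)"
    unfolding second_partial_def by simp
  also have "\<dots> = ev (dL i (dL i L)) y"
    using vector_derivative_at[OF ev_line[of "dL i L" y i 0]] by simp
  finally show ?thesis .
qed

lemma laplacian_ev: "laplacian (ev L) y = (\<Sum>i\<in>UNIV. ev (dL i (dL i L)) y)"
  unfolding laplacian_def second_partial_ev ..

definition scale :: "complex \<Rightarrow> (complex \<times> ('m::finite \<Rightarrow> nat)) list \<Rightarrow> (complex \<times> ('m \<Rightarrow> nat)) list" where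
  "scale a L = map (\<lambda>(c,m). (a*c, m)) L"

definition xmul :: "'m::finite \<Rightarrow> (complex \<times> ('m \<Rightarrow> nat)) list \<Rightarrow> (complex \<times> ('m \<Rightarrow> nat)) list" where
  "xmul k L = map (\<lambda>(c,m). (c, m(k := Suc (m k)))) L"

definition deg :: "nat \<Rightarrow> (complex \<times> ('m::finite \<Rightarrow> nat)) list \<Rightarrow> bool" where
  "deg l L \<longleftrightarrow> (\<forall>(c,m)\<in>set L. sum m UNIV = l)"

lemma ev_scale[simp]: "ev (scale a L) y = a * ev L y"
  by (induction L) (auto simp: scale_def algebra_simps)

lemma scale_Nil[simp]: "scale a [] = []" by (simp add: scale_def)
lemma xmul_Nil[simp]: "xmul k [] = []" by (simp add: xmul_def)
lemma scale_Cons[simp]: "scale a ((c,m)#L) = (a*c,m) # scale a L" by (simp add: scale_def)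
lemma scale_append[simp]: "scale a (A @ B) = scale a A @ scale a B" by (simp add: scale_def)
lemma xmul_Cons[simp]: "xmul k ((c,m)#L) = (c, m(k := Suc (m k))) # xmul k L" by (simp add: xmul_def)
lemma xmul_append[simp]: "xmul k (A @ B) = xmul k A @ xmul k B" by (simp add: xmul_def)

lemma mono_Suc: "mono (n(k := Suc (n k))) y = complex_of_real (y$k) * mono n y"
proof -
  have "mono (n(k := Suc (n k))) y = complex_of_real ((y$k) ^ Suc (n k)) * (\<Prod>i\<in>UNIV-{k}. complex_of_real ((y$i) ^ n i))"
    unfolding mono_def by (subst prod.remove[of UNIV k]) (auto intro!: prod.cong)
  moreover have "mono n y = complex_of_real ((y$k) ^ n k) * (\<Prod>i\<in>UNIV-{k}. complex_of_real ((y$i) ^ n i))"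
    unfolding mono_def by (subst prod.remove[of UNIV k]) (auto intro!: prod.cong)
  ultimately show ?thesis by simp
qed

lemma mono_pred: "m k \<noteq> 0 \<Longrightarrow> complex_of_real (y$k) * mono (m(k := m k - 1)) y = mono m y"
  using mono_Suc[of "m(k := m k - 1)" k y] by simp

lemma ev_xmul[simp]: "ev (xmul k L) y = complex_of_real (y$k) * ev L y"
  by (induction L) (auto simp: mono_Suc algebra_simps)

lemma dL_scale: "ev (dL i (scale a L)) y = a * ev (dL i L) y"
  by (induction L) (auto simp: algebra_simps)

lemma deg_append[simp]: "deg l (A @ B) \<longleftrightarrow> deg l A \<and> deg l B" by (auto simp: deg_def)
lemma deg_Nil[simp]: "deg l []" by (simp add: deg_def)
lemma deg_Cons[simp]: "deg l ((c,m)#L) \<longleftrightarrow> sum m UNIV = l \<and> deg l L" by (simp add: deg_def)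
lemma deg_scale: "deg l L \<Longrightarrow> deg l (scale a L)" by (induction L) auto

lemma sum_upd: "sum ((m::'m::finite \<Rightarrow> nat)(k := a)) (UNIV::'m set) = sum m UNIV - m k + a"
proof -
  have "sum (m(k := a)) UNIV = a + sum m (UNIV - {k})"
    by (subst sum.remove[of UNIV k]) (auto intro!: sum.cong)
  moreover have "sum m UNIV = m k + sum m (UNIV - {k})"
    by (subst sum.remove[of UNIV k]) auto
  ultimately have "sum (m(k := a)) UNIV + m k = sum m UNIV + a" by (simp add: add_ac)
  moreover have "m k \<le> sum m UNIV" using member_le_sum[of k UNIV m] by simp
  ultimately show ?thesis by linarith
qed

lemma sum_upd_Suc: "sum (m(k := Suc (m k))) (UNIV::'m::finite set) = Suc (sum m UNIV)"
  using sum_upd[of m k "Suc (m k)"] member_le_sum[of k UNIV m] by simp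

lemma deg_xmul: "deg l L \<Longrightarrow> deg (Suc l) (xmul k L)"
  by (induction L) (auto simp del: fun_upd_apply simp: sum_upd_Suc)

lemma deg_dL: "deg l L \<Longrightarrow> deg (l - 1) (dL i L)"
proof (induction L)
  case (Cons a L)
  obtain c m where a: "a = (c,m)" by fastforce
  have "m i \<noteq> 0 \<Longrightarrow> sum (m(i := m i - 1)) UNIV = sum m UNIV - 1"
    using member_le_sum[of i UNIV m] sum_upd[of m i "m i - 1"] by simp
  then show ?case using Cons a by (auto simp del: fun_upd_apply)
qed simp

lemma ev_fun_eq_dL: "(\<And>z. ev A z = ev B z) \<Longrightarrow> ev (dL i A) y = ev (dL i B) y"
proof -
  assume "\<And>z. ev A z = ev B z"
  then have "ev A = ev B" by auto
  then show ?thesis using pd_ev[of A i y] pd_ev[of B i y] by simp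
qed

lemma dL_xmul: "ev (dL j (xmul k M)) y = (if j = k then ev M y else 0) + complex_of_real (y$k) * ev (dL j M) y"
proof (induction M)
  case (Cons a M)
  obtain c m where a: "a = (c,m)" by fastforce
  have "ev (dL j [(c, m(k := Suc (m k)))]) y = (if j = k then c * mono m y else 0) + complex_of_real (y$k) * ev (dL j [(c,m)]) y"
  proof (cases "j = k")
    case True
    show ?thesis
    proof (cases "m k = 0")
      case True
      then have "m(k := 0) = m" by auto
      then show ?thesis using True \<open>j = k\<close> by simp
    next
      case False
      have mp: "complex_of_real (y$k) * mono (m(k := m k - 1)) y = mono m y" using mono_pred[of m _ y, OF False] .
      have "ev (dL j [(c, m(k := Suc (m k)))]) y = c * of_nat (Suc (m k)) * mono m y"
        using True by simp
      also have "\<dots> = c * mono m y + c * of_nat (m k) * (complex_of_real (y$k) * mono (m(k := m k - 1)) y)"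
        unfolding mp by (simp add: algebra_simps)
      also have "\<dots> = (if j = k then c * mono m y else 0) + complex_of_real (y$k) * ev (dL j [(c,m)]) y"
        using True False by (simp only: dL_Cons dL_Nil if_False append_Nil2 ev_Cons ev_Nil if_True) (simp add: algebra_simps)
      finally show ?thesis .
    qed
  next
    case False
    have "mono (m(k := Suc (m k), j := m j - 1)) y = complex_of_real (y$k) * mono (m(j := m j - 1)) y"
      using mono_Suc[of "m(j := m j - 1)" k y] False by (simp add: fun_upd_twist)
    then show ?thesis using False by auto
  qed
  then have "ev (dL j (xmul k [(c,m)])) y = (if j = k then ev [(c,m)] y else 0) + complex_of_real (y$k) * ev (dL j [(c,m)]) y"
    by simp
  moreover have "xmul k (a # M) = xmul k [(c,m)] @ xmul k M" using a by simp
  moreover have "a # M = [(c,m)] @ M" using a by simp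
  ultimately show ?case using Cons.IH
    by (simp only: dL_append ev_append) (simp add: algebra_simps)
qed simp

lemma euler: "deg l L \<Longrightarrow> (\<Sum>j\<in>UNIV. complex_of_real (y$j) * ev (dL j L) y) = of_nat l * ev L y"
proof (induction L)
  case (Cons a L)
  obtain c m where a: "a = (c,m)" by fastforce
  have "complex_of_real (y$j) * ev (dL j [(c,m)]) y = of_nat (m j) * (c * mono m y)" for j
  proof (cases "m j = 0")
    case False
    have mp: "complex_of_real (y$j) * mono (m(j := m j - 1)) y = mono m y" using mono_pred[of m _ y, OF False] .
    have "complex_of_real (y$j) * ev (dL j [(c,m)]) y = c * of_nat (m j) * (complex_of_real (y$j) * mono (m(j := m j - 1)) y)"
      using False by (simp only: dL_Cons dL_Nil if_False append_Nil2 ev_Cons ev_Nil) (simp add: algebra_simps)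
    then show ?thesis unfolding mp by (simp add: algebra_simps)
  qed simp
  then have "(\<Sum>j\<in>UNIV. complex_of_real (y$j) * ev (dL j [(c,m)]) y) = (\<Sum>j\<in>UNIV. of_nat (m j)) * (c * mono m y)"
    by (simp only: sum_distrib_right)
  also have "\<dots> = of_nat l * (c * mono m y)" using Cons.prems a by (simp only: of_nat_sum[symmetric]) simp
  finally have A: "(\<Sum>j\<in>UNIV. complex_of_real (y$j) * ev (dL j [(c,m)]) y) = of_nat l * (c * mono m y)" .
  have B: "(\<Sum>j\<in>UNIV. complex_of_real (y$j) * ev (dL j L) y) = of_nat l * ev L y"
    using Cons a by simp
  have "ev (dL j (a#L)) y = ev (dL j [(c,m)]) y + ev (dL j L) y" for j
    using a by simp
  then have "(\<Sum>j\<in>UNIV. complex_of_real (y$j) * ev (dL j (a#L)) y) =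
     (\<Sum>j\<in>UNIV. complex_of_real (y$j) * ev (dL j [(c,m)]) y) + (\<Sum>j\<in>UNIV. complex_of_real (y$j) * ev (dL j L) y)"
    by (simp only: distrib_left sum.distrib)
  also have "\<dots> = of_nat l * ev (a#L) y" unfolding A B using a by (simp add: distrib_left)
  finally show ?case .
qed simp

lemma dL_comm: "ev (dL i (dL j L)) y = ev (dL j (dL i L)) y"
proof (induction L)
  case (Cons a L)
  obtain c m where a: "a = (c,m)" by fastforce
  have "ev (dL i (dL j [(c,m)])) y = ev (dL j (dL i [(c,m)])) y"
    by (cases "i = j") (auto simp: fun_upd_twist algebra_simps)
  then show ?case using Cons a by simp
qed simp



lemma Ltil_ev:
  fixes y :: "real^'m::finite"
  assumes y: "norm y = 1" and f: "\<And>z. norm z = 1 \<Longrightarrow> f z = ev L z"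
  shows "Ltil k j f y = complex_of_real (y$k) * ev (dL j L) y - complex_of_real (y$j) * ev (dL k L) y"
proof -
  define v :: "real^'m" where "v = (\<chi> i. (if i = j then y$k else 0) - (if i = k then y$j else 0))"
  define g where "g = (\<lambda>t::real. (1 / norm (y + t *\<^sub>R v)) *\<^sub>R (y + t *\<^sub>R v))"
  have t: "y$i * v$i = (if i = j then y$j*y$k else 0) - (if i = k then y$k*y$j else 0)" for i
    by (simp add: v_def)
  have yv: "y \<bullet> v = 0"
    unfolding inner_vec_def by (simp add: t sum_subtractf)
  have nz: "y + t *\<^sub>R v \<noteq> 0" for t
  proof
    assume "y + t *\<^sub>R v = 0"
    then have "y \<bullet> (y + t *\<^sub>R v) = 0" by simp
    then show False using yv y by (simp add: inner_add_right dot_square_norm)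
  qed
  have ng: "norm (g t) = 1" for t using nz[of t] unfolding g_def by simp
  have Lt: "Ltil k j f y = vector_derivative (\<lambda>t. ev L (g t)) (at 0)"
  proof -
    have "f (g t) = ev L (g t)" for t using f ng by simp
    then have "(\<lambda>t. f ((1 / norm (y + t *\<^sub>R v)) *\<^sub>R (y + t *\<^sub>R v))) = (\<lambda>t. ev L (g t))"
      unfolding g_def by simp
    then show ?thesis unfolding Ltil_def Let_def v_def[symmetric] by simp
  qed
  have y0: "y \<noteq> 0" using y by auto
  have l: "((\<lambda>t. y + t *\<^sub>R v) has_derivative (\<lambda>h. h *\<^sub>R v)) (at 0)"
    by (auto intro!: derivative_eq_intros)
  have sy: "sgn y = y" using y by (simp add: sgn_div_norm)
  have n: "((\<lambda>t. norm (y + t *\<^sub>R v)) has_derivative (\<lambda>h. 0)) (at 0)"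
    using has_derivative_compose[OF l, of norm "\<lambda>h. h \<bullet> sgn y"] has_derivative_norm[OF y0]
    using yv by (simp add: sy inner_commute)
  have gd: "(g has_derivative (\<lambda>h. h *\<^sub>R v)) (at 0)"
  proof -
    have inv: "((\<lambda>t. inverse (norm (y + t *\<^sub>R v))) has_derivative (\<lambda>h. - (inverse (norm (y + 0 *\<^sub>R v)) * 0 * inverse (norm (y + 0 *\<^sub>R v))))) (at 0)"
      by (rule Deriv.has_derivative_inverse[OF _ n]) (use y in simp)
    have "((\<lambda>t. inverse (norm (y + t *\<^sub>R v)) *\<^sub>R (y + t *\<^sub>R v)) has_derivative
       (\<lambda>h. inverse (norm (y + 0 *\<^sub>R v)) *\<^sub>R (h *\<^sub>R v) + (- (inverse (norm (y + 0 *\<^sub>R v)) * 0 * inverse (norm (y + 0 *\<^sub>R v)))) *\<^sub>R (y + 0 *\<^sub>R v))) (at 0)"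
      by (rule has_derivative_scaleR[OF inv l])
    then show ?thesis unfolding g_def using y by (simp add: divide_inverse)
  qed
  have "((\<lambda>t. ev L (g t)) has_derivative (\<lambda>h. \<Sum>i\<in>UNIV. complex_of_real ((h *\<^sub>R v)$i) * ev (dL i L) (g 0))) (at 0)"
    using has_derivative_compose[OF gd ev_deriv] .
  moreover have "g 0 = y" unfolding g_def using y by simp
  ultimately have "((\<lambda>t. ev L (g t)) has_vector_derivative (\<Sum>i\<in>UNIV. complex_of_real (v$i) * ev (dL i L) y)) (at 0)"
  proof -
    have cs: "h *\<^sub>R z = complex_of_real h * z" for h and z :: complex by (simp add: scaleR_conv_of_real)
    assume a: "((\<lambda>t. ev L (g t)) has_derivative (\<lambda>h. \<Sum>i\<in>UNIV. complex_of_real ((h *\<^sub>R v)$i) * ev (dL i L) (g 0))) (at 0)" "g 0 = y"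
    show ?thesis unfolding has_vector_derivative_def cs using a
      by (simp add: sum_distrib_left algebra_simps)
  qed
  then have "Ltil k j f y = (\<Sum>i\<in>UNIV. complex_of_real (v$i) * ev (dL i L) y)"
    unfolding Lt by (rule vector_derivative_at)
  also have "\<dots> = complex_of_real (y$k) * ev (dL j L) y - complex_of_real (y$j) * ev (dL k L) y"
  proof -
    have "complex_of_real (v$i) * ev (dL i L) y = (if i = j then complex_of_real (y$k) * ev (dL j L) y else 0)
       - (if i = k then complex_of_real (y$j) * ev (dL k L) y else 0)" for i
      by (simp add: v_def left_diff_distrib)
    then show ?thesis by (simp add: sum_subtractf)
  qed
  finally show ?thesis .
qed



definition T :: "'m::finite \<Rightarrow> 'm \<Rightarrow> (complex \<times> ('m \<Rightarrow> nat)) list \<Rightarrow> (complex \<times> ('m \<Rightarrow> nat)) list" where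
  "T k j L = xmul k (dL j L) @ scale (-1) (xmul j (dL k L))"

lemma ev_T: "ev (T k j L) y = complex_of_real (y$k) * ev (dL j L) y - complex_of_real (y$j) * ev (dL k L) y"
  by (simp add: T_def)

definition harm :: "nat \<Rightarrow> (complex \<times> ('m::finite \<Rightarrow> nat)) list \<Rightarrow> bool" where
  "harm l L \<longleftrightarrow> deg l L \<and> (\<forall>y. (\<Sum>i\<in>UNIV. ev (dL i (dL i L)) y) = 0)"

lemma dL_T1: "ev (dL j (T k j L)) y = ((if j = k then ev (dL j L) y else 0) + complex_of_real (y$k) * ev (dL j (dL j L)) y)
   - (ev (dL k L) y + complex_of_real (y$j) * ev (dL j (dL k L)) y)"
  by (simp add: T_def dL_scale dL_xmul)

lemma dL_T2: "ev (dL k (T k j L)) y = (ev (dL j L) y + complex_of_real (y$k) * ev (dL k (dL j L)) y)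
   - ((if k = j then ev (dL k L) y else 0) + complex_of_real (y$j) * ev (dL k (dL k L)) y)"
  by (simp add: T_def dL_scale dL_xmul)

lemma eigen:
  fixes y :: "real^'m::finite"
  assumes h: "harm l L"
  shows "(\<Sum>k\<in>UNIV. \<Sum>j\<in>UNIV. complex_of_real (y$k) * ev (dL j (T k j L)) y - complex_of_real (y$j) * ev (dL k (T k j L)) y)
    = (2 - 2 * of_nat CARD('m) - 2 * of_nat (l - 1)) * (of_nat l * ev L y)"
proof -
  define Y where "Y a = complex_of_real (y$a)" for a
  define D where "D a = ev (dL a L) y" for a
  define P where "P a b = ev (dL a (dL b L)) y" for a b
  define E where "E = of_nat l * ev L y"
  have lap: "(\<Sum>j\<in>UNIV. P j j) = 0" using h unfolding harm_def P_def by simp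
  have Eu: "(\<Sum>j\<in>UNIV. Y j * D j) = E" using h euler[of l L y] unfolding harm_def Y_def D_def E_def by simp
  have Eu2: "(\<Sum>j\<in>UNIV. Y j * P j k) = of_nat (l - 1) * D k" for k
    using h euler[of "l - 1" "dL k L" y] deg_dL[of l L k] unfolding harm_def Y_def D_def P_def by simp
  have sym: "P a b = P b a" for a b unfolding P_def by (rule dL_comm)
  have tm: "Y k * ev (dL j (T k j L)) y - Y j * ev (dL k (T k j L)) y =
     (if j = k then Y k * D k else 0) + Y k * Y k * P j j - Y k * D k - Y k * Y j * P j k
     - Y j * D j - Y j * Y k * P k j + (if j = k then Y j * D j else 0) + Y j * Y j * P k k" for k j
    unfolding dL_T1 dL_T2 Y_def[symmetric] D_def[symmetric] P_def[symmetric]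
    by (auto simp: algebra_simps)
  have S1: "(\<Sum>k\<in>(UNIV::'m set). \<Sum>j\<in>(UNIV::'m set). (if j = k then Y k * D k else 0)) = E" using Eu by simp
  have S7: "(\<Sum>k\<in>(UNIV::'m set). \<Sum>j\<in>(UNIV::'m set). (if j = k then Y j * D j else 0)) = E" using Eu by simp
  have S2: "(\<Sum>k\<in>(UNIV::'m set). \<Sum>j\<in>(UNIV::'m set). Y k * Y k * P j j) = 0" by (simp add: sum_distrib_left[symmetric] lap)
  have S8: "(\<Sum>k\<in>(UNIV::'m set). \<Sum>j\<in>(UNIV::'m set). Y j * Y j * P k k) = 0"
    by (subst sum.swap) (simp add: sum_distrib_left[symmetric] lap)
  have S3: "(\<Sum>k\<in>(UNIV::'m set). \<Sum>j\<in>(UNIV::'m set). Y k * D k) = of_nat CARD('m) * E" using Eu by (simp add: sum_distrib_left[symmetric])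
  have S5: "(\<Sum>k\<in>(UNIV::'m set). \<Sum>j\<in>(UNIV::'m set). Y j * D j) = of_nat CARD('m) * E" using Eu by simp
  have S4: "(\<Sum>k\<in>(UNIV::'m set). \<Sum>j\<in>(UNIV::'m set). Y k * Y j * P j k) = of_nat (l - 1) * E"
  proof -
    have "(\<Sum>k\<in>(UNIV::'m set). \<Sum>j\<in>(UNIV::'m set). Y k * Y j * P j k) = (\<Sum>k\<in>(UNIV::'m set). Y k * (\<Sum>j\<in>(UNIV::'m set). Y j * P j k))"
      by (simp add: sum_distrib_left mult.assoc)
    also have "\<dots> = (\<Sum>k\<in>(UNIV::'m set). of_nat (l - 1) * (Y k * D k))" by (simp add: Eu2 algebra_simps)
    also have "\<dots> = of_nat (l - 1) * E" by (simp add: sum_distrib_left[symmetric] Eu)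
    finally show ?thesis .
  qed
  have S6: "(\<Sum>k\<in>(UNIV::'m set). \<Sum>j\<in>(UNIV::'m set). Y j * Y k * P k j) = of_nat (l - 1) * E"
    using S4 by (subst sum.swap) simp
  have "(\<Sum>k\<in>(UNIV::'m set). \<Sum>j\<in>(UNIV::'m set). Y k * ev (dL j (T k j L)) y - Y j * ev (dL k (T k j L)) y)
     = (\<Sum>k\<in>(UNIV::'m set). \<Sum>j\<in>(UNIV::'m set). (if j = k then Y k * D k else 0)) + (\<Sum>k\<in>(UNIV::'m set). \<Sum>j\<in>(UNIV::'m set). Y k * Y k * P j j)
       - (\<Sum>k\<in>(UNIV::'m set). \<Sum>j\<in>(UNIV::'m set). Y k * D k) - (\<Sum>k\<in>(UNIV::'m set). \<Sum>j\<in>(UNIV::'m set). Y k * Y j * P j k)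
       - (\<Sum>k\<in>(UNIV::'m set). \<Sum>j\<in>(UNIV::'m set). Y j * D j) - (\<Sum>k\<in>(UNIV::'m set). \<Sum>j\<in>(UNIV::'m set). Y j * Y k * P k j)
       + (\<Sum>k\<in>(UNIV::'m set). \<Sum>j\<in>(UNIV::'m set). (if j = k then Y j * D j else 0)) + (\<Sum>k\<in>(UNIV::'m set). \<Sum>j\<in>(UNIV::'m set). Y j * Y j * P k k)"
    unfolding tm by (simp only: sum.distrib sum_subtractf)
  also have "\<dots> = (2 - 2 * of_nat CARD('m) - 2 * of_nat (l - 1)) * E"
    unfolding S1 S2 S3 S4 S5 S6 S7 S8 by (simp add: algebra_simps)
  finally show ?thesis unfolding Y_def E_def .
qed



definition Xp :: "(complex \<times> ('m::finite \<Rightarrow> nat)) list \<Rightarrow> real^'m \<Rightarrow> complex" where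
  "Xp L y = (\<Sum>k\<in>UNIV. \<Sum>j\<in>UNIV. complex_of_real (y$k) * ev (dL j (T k j L)) y - complex_of_real (y$j) * ev (dL k (T k j L)) y)"

lemma Xp_Nil: "Xp [] y = 0" by (simp add: Xp_def T_def)

lemma Xp_append: "Xp (A @ B) y = Xp A y + Xp B y"
proof -
  have "complex_of_real (y$k) * ev (dL j (T k j (A@B))) y - complex_of_real (y$j) * ev (dL k (T k j (A@B))) y
    = (complex_of_real (y$k) * ev (dL j (T k j A)) y - complex_of_real (y$j) * ev (dL k (T k j A)) y)
    + (complex_of_real (y$k) * ev (dL j (T k j B)) y - complex_of_real (y$j) * ev (dL k (T k j B)) y)" for k j
    unfolding dL_T1 dL_T2 by (cases "j = k") (simp_all add: algebra_simps)
  then show ?thesis unfolding Xp_def by (simp add: sum.distrib)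
qed

lemma Xp_concat: "Xp (concat (map Ls xs)) y = (\<Sum>x\<leftarrow>xs. Xp (Ls x) y)"
  by (induction xs) (auto simp: Xp_Nil Xp_append)

lemma ev_concat: "ev (concat (map Ls xs)) y = (\<Sum>x\<leftarrow>xs. ev (Ls x) y)"
  by (induction xs) auto

lemma Xp_sphere:
  fixes y :: "real^'m::finite"
  assumes y: "norm y = 1" and f: "\<And>z. norm z = 1 \<Longrightarrow> g z = ev L z"
  shows "(\<Sum>k\<in>UNIV. \<Sum>j\<in>UNIV. Ltil k j (Ltil k j g) y) = Xp L y"
proof -
  have "Ltil k j (Ltil k j g) y = complex_of_real (y$k) * ev (dL j (T k j L)) y - complex_of_real (y$j) * ev (dL k (T k j L)) y" for k j
  proof (rule Ltil_ev[OF y])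
    fix z :: "real^'m" assume z: "norm z = 1"
    show "Ltil k j g z = ev (T k j L) z" unfolding ev_T by (rule Ltil_ev[OF z f])
  qed
  then show ?thesis unfolding Xp_def by simp
qed

lemma harm_scale: "harm l L \<Longrightarrow> harm l (scale a L)"
proof -
  assume h: "harm l L"
  have "ev (dL i (dL i (scale a L))) y = a * ev (dL i (dL i L)) y" for i y
  proof -
    have "ev (dL i (dL i (scale a L))) y = ev (dL i (scale a (dL i L))) y"
      by (rule ev_fun_eq_dL) (simp add: dL_scale)
    then show ?thesis by (simp add: dL_scale)
  qed
  then show ?thesis using h by (simp add: harm_def deg_scale sum_distrib_left[symmetric])
qed

definition lamr :: "'m::finite itself \<Rightarrow> nat \<Rightarrow> real" where
  "lamr _ k = - 2 * real k * (real k + real CARD('m) - 2)"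

lemma lamr_inj:
  assumes "CARD('m::finite) \<ge> 2" "lamr TYPE('m) a = lamr TYPE('m) b"
  shows "a = b"
proof (rule ccontr)
  assume "a \<noteq> b"
  then consider "a < b" | "b < a" by linarith
  then show False
  proof cases
    case 1
    have "lamr TYPE('m) a - lamr TYPE('m) b = 2 * (real b - real a) * (real a + real b + real CARD('m) - 2)"
      unfolding lamr_def by (simp add: algebra_simps)
    moreover have "real a + real b + real CARD('m) - 2 > 0" using 1 assms(1) by linarith
    ultimately show False using 1 assms(2) by simp
  next
    case 2
    have "lamr TYPE('m) b - lamr TYPE('m) a = 2 * (real a - real b) * (real a + real b + real CARD('m) - 2)"
      unfolding lamr_def by (simp add: algebra_simps)
    moreover have "real a + real b + real CARD('m) - 2 > 0" using 2 assms(1) by linarith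
    ultimately show False using 2 assms(2) by simp
  qed
qed

lemma eigen2:
  assumes "harm l (L :: (complex \<times> ('m::finite \<Rightarrow> nat)) list)"
  shows "Xp L y = complex_of_real (lamr TYPE('m) l) * ev L y"
proof -
  have "Xp L y = (2 - 2 * of_nat CARD('m) - 2 * of_nat (l - 1)) * (of_nat l * ev L y)"
    unfolding Xp_def by (rule eigen[OF assms])
  also have "\<dots> = complex_of_real (lamr TYPE('m) l) * ev L y"
    by (cases l) (auto simp: lamr_def algebra_simps)
  finally show ?thesis .
qed

lemma uniq:
  fixes Ls :: "nat \<Rightarrow> (complex \<times> ('m::finite \<Rightarrow> nat)) list"
  assumes N: "CARD('m) \<ge> 2"
  shows "finite S \<Longrightarrow> (\<forall>k\<in>S. harm k (Ls k)) \<Longrightarrow> (\<forall>y::real^'m. norm y = 1 \<longrightarrow> (\<Sum>k\<in>S. ev (Ls k) y) = 0)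
    \<Longrightarrow> \<forall>k\<in>S. \<forall>y::real^'m. norm y = 1 \<longrightarrow> ev (Ls k) y = 0"
proof (induction S arbitrary: Ls rule: finite_induct)
  case empty
  then show ?case by simp
next
  case (insert a S)
  obtain xs where xs: "set xs = insert a S" "distinct xs"
    using finite_distinct_list[of "insert a S"] insert.hyps(1) by blast
  define lam where "lam k = complex_of_real (lamr TYPE('m) k)" for k
  have main: "(\<Sum>k\<in>insert a S. lam k * ev (Ls k) y) = 0" if y: "norm y = 1" for y :: "real^'m"
  proof -
    define BL where "BL = concat (map Ls xs)"
    have evBL: "ev BL z = (\<Sum>k\<in>insert a S. ev (Ls k) z)" for z
      unfolding BL_def ev_concat using xs by (simp add: sum_list_distinct_conv_sum_set)
    have "Xp BL y = (\<Sum>k\<in>UNIV. \<Sum>j\<in>UNIV. Ltil k j (Ltil k j (ev BL)) y)"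
      by (rule Xp_sphere[OF y, symmetric]) simp
    also have "\<dots> = Xp [] y"
      by (rule Xp_sphere[OF y]) (use insert.prems(2) evBL in simp)
    finally have "Xp BL y = 0" by (simp add: Xp_Nil)
    moreover have "Xp BL y = (\<Sum>k\<in>insert a S. lam k * ev (Ls k) y)"
    proof -
      have "Xp BL y = (\<Sum>k\<in>insert a S. Xp (Ls k) y)"
        unfolding BL_def Xp_concat using xs by (simp add: sum_list_distinct_conv_sum_set)
      also have "\<dots> = (\<Sum>k\<in>insert a S. lam k * ev (Ls k) y)"
        using insert.prems(1) by (intro sum.cong refl) (auto simp: eigen2 lam_def)
      finally show ?thesis .
    qed
    ultimately show ?thesis by simp
  qed
  define Ls' where "Ls' k = scale (lam k - lam a) (Ls k)" for k
  have h': "\<forall>k\<in>S. harm k (Ls' k)" using insert.prems(1) by (simp add: Ls'_def harm_scale)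
  have s': "\<forall>y::real^'m. norm y = 1 \<longrightarrow> (\<Sum>k\<in>S. ev (Ls' k) y) = 0"
  proof (intro allI impI)
    fix y :: "real^'m" assume y: "norm y = 1"
    have "(\<Sum>k\<in>S. ev (Ls' k) y) = (\<Sum>k\<in>insert a S. (lam k - lam a) * ev (Ls k) y)"
      using insert.hyps by (simp add: Ls'_def)
    also have "\<dots> = (\<Sum>k\<in>insert a S. lam k * ev (Ls k) y) - lam a * (\<Sum>k\<in>insert a S. ev (Ls k) y)"
      by (simp add: left_diff_distrib sum_subtractf sum_distrib_left)
    also have "\<dots> = 0" using main[OF y] insert.prems(2) y by simp
    finally show "(\<Sum>k\<in>S. ev (Ls' k) y) = 0" .
  qed
  have IH: "\<forall>k\<in>S. \<forall>y::real^'m. norm y = 1 \<longrightarrow> ev (Ls' k) y = 0" using insert.IH[OF h' s'] .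
  have S0: "\<forall>k\<in>S. \<forall>y::real^'m. norm y = 1 \<longrightarrow> ev (Ls k) y = 0"
  proof (intro ballI allI impI)
    fix k y assume k: "k \<in> S" and y: "norm (y::real^'m) = 1"
    have "k \<noteq> a" using k insert.hyps by auto
    then have "lam k \<noteq> lam a" using lamr_inj[OF N] unfolding lam_def by auto
    moreover have "(lam k - lam a) * ev (Ls k) y = 0" using IH k y by (simp add: Ls'_def)
    ultimately show "ev (Ls k) y = 0" by simp
  qed
  have "\<forall>y::real^'m. norm y = 1 \<longrightarrow> ev (Ls a) y = 0"
  proof (intro allI impI)
    fix y :: "real^'m" assume y: "norm y = 1"
    have "(\<Sum>k\<in>insert a S. ev (Ls k) y) = ev (Ls a) y + (\<Sum>k\<in>S. ev (Ls k) y)" using insert.hyps by simp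
    also have "(\<Sum>k\<in>S. ev (Ls k) y) = 0" using S0 y by simp
    finally show "ev (Ls a) y = 0" using insert.prems(2) y by simp
  qed
  then show ?case using S0 by blast
qed



lemma finite_Ml: "finite {m :: 'm::finite \<Rightarrow> nat. sum m UNIV = l}"
proof -
  have "finite {f :: 'm \<Rightarrow> nat. \<forall>x. (x \<in> UNIV \<longrightarrow> f x \<in> {..l}) \<and> (x \<notin> UNIV \<longrightarrow> f x = 0)}"
    by (rule finite_set_of_finite_funs) auto
  moreover have "{m :: 'm \<Rightarrow> nat. sum m UNIV = l} \<subseteq> {f :: 'm \<Rightarrow> nat. \<forall>x. (x \<in> UNIV \<longrightarrow> f x \<in> {..l}) \<and> (x \<notin> UNIV \<longrightarrow> f x = 0)}"
  proof
    fix m :: "'m \<Rightarrow> nat" assume "m \<in> {m. sum m UNIV = l}"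
    then have "m x \<le> l" for x using member_le_sum[of x UNIV m] by simp
    then show "m \<in> {f :: 'm \<Rightarrow> nat. \<forall>x. (x \<in> UNIV \<longrightarrow> f x \<in> {..l}) \<and> (x \<notin> UNIV \<longrightarrow> f x = 0)}" by simp
  qed
  ultimately show ?thesis by (rule finite_subset[rotated])
qed

definition coef :: "(complex \<times> ('m::finite \<Rightarrow> nat)) list \<Rightarrow> ('m \<Rightarrow> nat) \<Rightarrow> complex" where
  "coef L \<mu> = (\<Sum>(c,m)\<leftarrow>L. if m = \<mu> then c else 0)"

lemma homog_of_list:
  assumes "deg l L" shows "homog_poly l (ev L)"
proof -
  have "ev L y = (\<Sum>\<mu>\<in>{m. sum m UNIV = l}. coef L \<mu> * mono \<mu> y)" for y
    using assms
  proof (induction L)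
    case Nil then show ?case by (simp add: coef_def)
  next
    case (Cons a L)
    obtain c m where a: "a = (c,m)" by fastforce
    have co: "coef (a#L) \<mu> = (if m = \<mu> then c else 0) + coef L \<mu>" for \<mu> by (simp add: coef_def a)
    have m: "m \<in> {m. sum m UNIV = l}" using Cons.prems a by simp
    have "(\<Sum>\<mu>\<in>{m. sum m UNIV = l}. coef (a#L) \<mu> * mono \<mu> y) =
      (\<Sum>\<mu>\<in>{m. sum m UNIV = l}. (if m = \<mu> then c * mono \<mu> y else 0)) + (\<Sum>\<mu>\<in>{m. sum m UNIV = l}. coef L \<mu> * mono \<mu> y)"
    proof -
      have "coef (a#L) \<mu> * mono \<mu> y = (if m = \<mu> then c * mono \<mu> y else 0) + coef L \<mu> * mono \<mu> y" for \<mu>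
        unfolding co by (simp add: distrib_right)
      then show ?thesis by (simp add: sum.distrib)
    qed
    also have "(\<Sum>\<mu>\<in>{m. sum m UNIV = l}. (if m = \<mu> then c * mono \<mu> y else 0)) = c * mono m y"
      by (subst sum.delta'[OF finite_Ml]) (use m in simp)
    finally show ?case using Cons a by simp
  qed
  then show ?thesis unfolding homog_poly_def mono_def[symmetric] by blast
qed

lemma list_of_homog:
  assumes "homog_poly l p" shows "\<exists>L. deg l L \<and> p = ev L"
proof -
  obtain c where c: "\<And>y. p y = (\<Sum>m\<in>{m. sum m UNIV = l}. c m * mono m y)"
    using assms unfolding homog_poly_def mono_def[symmetric] by blast
  obtain xs where xs: "set xs = {m :: 'a \<Rightarrow> nat. sum m UNIV = l}" "distinct xs"
    using finite_distinct_list[OF finite_Ml] by blast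
  define L where "L = map (\<lambda>m. (c m, m)) xs"
  have "ev L y = (\<Sum>m\<leftarrow>xs. c m * mono m y)" for y unfolding L_def ev_def by (simp add: o_def)
  then have "ev L y = p y" for y using xs c by (simp add: sum_list_distinct_conv_sum_set)
  moreover have "deg l L" using xs unfolding L_def deg_def by auto
  ultimately show ?thesis by (intro exI[of _ L]) auto
qed

lemma harmonic_iff: "harmonic_homog l p \<longleftrightarrow> (\<exists>L. harm l L \<and> p = ev L)"
proof
  assume "harmonic_homog l p"
  then obtain L where L: "deg l L" "p = ev L" "\<forall>y. laplacian p y = 0"
    using list_of_homog unfolding harmonic_homog_def by blast
  then show "\<exists>L. harm l L \<and> p = ev L" unfolding harm_def using laplacian_ev by metis
next
  assume "\<exists>L. harm l L \<and> p = ev L"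
  then obtain L where "harm l L" "p = ev L" by blast
  then show "harmonic_homog l p" unfolding harmonic_homog_def harm_def
    using homog_of_list laplacian_ev by metis
qed

lemma SH_iff: "f \<in> SH l \<longleftrightarrow> (\<exists>L. harm l L \<and> f = restr (ev L))"
  unfolding SH_def harmonic_iff by blast

lemma harm_Nil: "harm l []" by (simp add: harm_def)

lemma restr_Nil: "restr (ev []) = (\<lambda>_. 0)" by (simp add: restr_def fun_eq_iff)

lemma zero_SH: "(\<lambda>_. 0::complex) \<in> (SH l :: (real^'m::finite \<Rightarrow> complex) set)"
  unfolding SH_iff by (rule exI[of _ "[]"]) (simp add: harm_Nil restr_Nil)

lemma harm_append: "harm l A \<Longrightarrow> harm l B \<Longrightarrow> harm l (A @ B)"
  by (simp add: harm_def sum.distrib)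

lemma decomp_unique:
  assumes N: "CARD('m::finite) \<ge> 2"
    and c: "is_harm_decomp (g :: real^'m \<Rightarrow> complex) c" and d: "is_harm_decomp g d"
  shows "c = d"
proof -
  have "\<forall>k. \<exists>L. harm k L \<and> c k = restr (ev L)" using c SH_iff unfolding is_harm_decomp_def by blast
  then obtain Lc where Lc: "\<And>k. harm k (Lc k) \<and> c k = restr (ev (Lc k))" by metis
  have "\<forall>k. \<exists>L. harm k L \<and> d k = restr (ev L)" using d SH_iff unfolding is_harm_decomp_def by blast
  then obtain Ld where Ld: "\<And>k. harm k (Ld k) \<and> d k = restr (ev (Ld k))" by metis
  define S where "S = {k. c k \<noteq> (\<lambda>_. 0)} \<union> {k. d k \<noteq> (\<lambda>_. 0)}"
  have fS: "finite S" using c d unfolding S_def is_harm_decomp_def by auto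
  define Ls where "Ls k = Lc k @ scale (-1) (Ld k)" for k
  have hL: "\<forall>k\<in>S. harm k (Ls k)" using Lc Ld harm_append harm_scale unfolding Ls_def by blast
  have sc: "(\<Sum>k\<in>S. c k y) = g y" if y: "norm y = 1" for y
  proof -
    have "(\<Sum>k\<in>S. c k y) = (\<Sum>k\<in>{k. c k \<noteq> (\<lambda>_. 0)}. c k y)"
      by (rule sum.mono_neutral_right[OF fS]) (auto simp: S_def)
    then show ?thesis using c y unfolding is_harm_decomp_def by simp
  qed
  have sd: "(\<Sum>k\<in>S. d k y) = g y" if y: "norm y = 1" for y
  proof -
    have "(\<Sum>k\<in>S. d k y) = (\<Sum>k\<in>{k. d k \<noteq> (\<lambda>_. 0)}. d k y)"
      by (rule sum.mono_neutral_right[OF fS]) (auto simp: S_def)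
    then show ?thesis using d y unfolding is_harm_decomp_def by simp
  qed
  have evs: "ev (Ls k) y = c k y - d k y" if y: "norm y = 1" for k y
    using Lc[of k] Ld[of k] y by (simp add: Ls_def restr_def)
  have "\<forall>y::real^'m. norm y = 1 \<longrightarrow> (\<Sum>k\<in>S. ev (Ls k) y) = 0"
    using sc sd evs by (simp add: sum_subtractf)
  then have z: "\<forall>k\<in>S. \<forall>y::real^'m. norm y = 1 \<longrightarrow> ev (Ls k) y = 0"
    using uniq[OF N fS hL] by blast
  show "c = d"
  proof (rule ext)
    fix k
    show "c k = d k"
    proof (cases "k \<in> S")
      case True
      show ?thesis
      proof (rule ext)
        fix y :: "real^'m"
        show "c k y = d k y"
        proof (cases "norm y = 1")
          case True then show ?thesis using z \<open>k \<in> S\<close> evs[of y k] by simp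
        next
          case False then show ?thesis using Lc[of k] Ld[of k] by (simp add: restr_def)
        qed
      qed
    next
      case False then show ?thesis unfolding S_def by auto
    qed
  qed
qed

lemma harm_comp_eq:
  assumes N: "CARD('m::finite) \<ge> 2" and h: "harm l M"
    and g: "\<And>y. norm y = 1 \<Longrightarrow> (g :: real^'m \<Rightarrow> complex) y = ev M y"
  shows "harm_comp g = (\<lambda>k. if k = l then restr (ev M) else (\<lambda>_. 0))"
proof -
  define c0 where "c0 = (\<lambda>k. if k = l then restr (ev M) else (\<lambda>_::real^'m. 0::complex))"
  have sub: "{k. c0 k \<noteq> (\<lambda>_. 0)} \<subseteq> {l}" unfolding c0_def by auto
  have dec: "is_harm_decomp g c0"
    unfolding is_harm_decomp_def
  proof (intro conjI allI impI)
    fix k show "c0 k \<in> SH k" unfolding c0_def using SH_iff h zero_SH by auto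
  next
    show "finite {k. c0 k \<noteq> (\<lambda>_. 0)}" using sub finite_subset by blast
  next
    fix y :: "real^'m" assume y: "norm y = 1"
    show "g y = (\<Sum>k\<in>{k. c0 k \<noteq> (\<lambda>_. 0)}. c0 k y)"
    proof (cases "restr (ev M) = (\<lambda>_. 0)")
      case True
      then have "{k. c0 k \<noteq> (\<lambda>_. 0)} = {}" unfolding c0_def by auto
      moreover have "ev M y = 0" using y fun_cong[OF True, of y] unfolding restr_def by simp
      ultimately show ?thesis using g[OF y] by simp
    next
      case False
      then have "{k. c0 k \<noteq> (\<lambda>_. 0)} = {l}" unfolding c0_def by auto
      then show ?thesis using g[OF y] y by (simp add: c0_def restr_def)
    qed
  qed
  have "harm_comp g = c0"
    unfolding harm_comp_def
  proof (rule the_equality)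
    show "is_harm_decomp g c0" by (rule dec)
    fix c assume "is_harm_decomp g c" then show "c = c0" using decomp_unique[OF N _ dec] by blast
  qed
  then show ?thesis unfolding c0_def .
qed

lemma fcalc_eq:
  assumes "harm_comp g = (\<lambda>k. if k = l then h else (\<lambda>_. 0))"
  shows "fcalc phi g = (\<lambda>y. phi ((real l + (dimS TYPE('m::finite) - 1) / 2)\<^sup>2) * h (y :: real^'m))"
proof (cases "h = (\<lambda>_. 0)")
  case True
  then have "{k. harm_comp g k \<noteq> (\<lambda>_. 0)} = {}" using assms by auto
  then show ?thesis unfolding fcalc_def using True by simp
next
  case False
  then have "{k. harm_comp g k \<noteq> (\<lambda>_. 0)} = {l}" using assms by auto
  then show ?thesis unfolding fcalc_def using assms by simp
qed



lemma dL_concat: "dL k (concat (map F xs)) = concat (map (\<lambda>x. dL k (F x)) xs)"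
  by (induction xs) auto

lemma harm_dL:
  fixes L :: "(complex \<times> ('m::finite \<Rightarrow> nat)) list"
  shows "harm l L \<Longrightarrow> harm (l - 1) (dL k L)"
proof -
  assume h: "harm l L"
  have c: "ev (dL i (dL i (dL k L))) y = ev (dL k (dL i (dL i L))) y" for i y
  proof -
    have "ev (dL i (dL i (dL k L))) y = ev (dL i (dL k (dL i L))) y"
      by (rule ev_fun_eq_dL) (rule dL_comm)
    also have "\<dots> = ev (dL k (dL i (dL i L))) y" by (rule dL_comm)
    finally show ?thesis .
  qed
  obtain xs where xs: "set xs = (UNIV :: 'm set)" "distinct xs" using finite_distinct_list[of "UNIV :: 'm set"] by auto
  define X where "X = concat (map (\<lambda>i. dL i (dL i L)) xs)"
  have "ev X z = ev [] z" for z
    using h xs unfolding X_def ev_concat harm_def by (simp add: sum_list_distinct_conv_sum_set)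
  then have "ev (dL k X) y = ev (dL k []) y" for y by (rule ev_fun_eq_dL)
  moreover have "ev (dL k X) y = (\<Sum>i\<in>UNIV. ev (dL k (dL i (dL i L))) y)" for y
    unfolding X_def dL_concat ev_concat using xs by (simp add: sum_list_distinct_conv_sum_set)
  ultimately show ?thesis using h deg_dL unfolding harm_def c by auto
qed

lemma sum_sq_sphere:
  fixes y :: "real^'m::finite"
  assumes "norm y = 1"
  shows "(\<Sum>j\<in>UNIV. complex_of_real (y$j) * complex_of_real (y$j)) = 1"
proof -
  have "y \<bullet> y = 1" using assms by (simp add: dot_square_norm)
  then have "(\<Sum>j\<in>UNIV. y$j * y$j) = 1" by (simp add: inner_vec_def)
  then have "complex_of_real (\<Sum>j\<in>UNIV. y$j * y$j) = 1" by simp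
  then show ?thesis by simp
qed

lemma restr_scale: "restr (ev (scale a L)) y = a * restr (ev L) y"
  by (simp add: restr_def)

lemma opA_harm:
  fixes L :: "(complex \<times> ('m::finite \<Rightarrow> nat)) list"
  assumes N: "CARD('m) \<ge> 3" and h: "harm l L" and f: "\<And>z. norm z = 1 \<Longrightarrow> f z = ev L z"
  shows "opA hbar k f = (\<lambda>y. complex_of_real (hbar * (sqrt (2 / (dimS TYPE('m) - 1)) * ((real (l - 1) + (dimS TYPE('m) - 1) / 2)\<^sup>2) powr (1/4))
       * (1 / (sqrt (2 / (dimS TYPE('m) - 1)) * ((real l + (dimS TYPE('m) - 1) / 2)\<^sup>2) powr (1/4)))) * restr (ev (dL k L)) y)"
proof -
  define nn where "nn = dimS TYPE('m)"
  have nn: "nn \<ge> 2" using N unfolding nn_def dimS_def by simp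
  have N2: "CARD('m) \<ge> 2" using N by simp
  define a where "a = 1 / (sqrt (2 / (nn - 1)) * ((real l + (nn - 1) / 2)\<^sup>2) powr (1/4))"
  define b where "b = sqrt (2 / (nn - 1)) * ((real (l - 1) + (nn - 1) / 2)\<^sup>2) powr (1/4)"
  have hc1: "harm_comp f = (\<lambda>i. if i = l then restr (ev L) else (\<lambda>_. 0))"
    by (rule harm_comp_eq[OF N2 h f])
  have F1: "opMinv f = (\<lambda>y. complex_of_real a * restr (ev L) y)"
    unfolding opMinv_def fcalc_eq[OF hc1] a_def nn_def ..
  define A where "A = complex_of_real a"
  have F1s: "opMinv f z = ev (scale A L) z" if "norm z = 1" for z
    using that by (simp add: F1 A_def restr_def)
  have hA: "harm l (scale A L)" using h by (rule harm_scale)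
  have hc2: "harm_comp (opMinv f) = (\<lambda>i. if i = l then restr (ev (scale A L)) else (\<lambda>_. 0))"
    by (rule harm_comp_eq[OF N2 hA F1s])
  have sq: "sqrt ((real l + (nn - 1) / 2)\<^sup>2) - (nn - 1) / 2 = real l" using nn by simp
  have opN: "opN hbar (opMinv f) = (\<lambda>y. complex_of_real (hbar * real l) * restr (ev (scale A L)) y)"
    unfolding opN_def fcalc_eq[OF hc2] nn_def[symmetric] sq ..
  have E: "opE hbar k (opMinv f) y = ev (scale (complex_of_real hbar * A) (dL k L)) y" if y: "norm y = 1" for y
  proof -
    define Y where "Y j = complex_of_real (y$j)" for j
    define D where "D j = ev (dL j L) y" for j
    have Lt: "Ltil k j (opMinv f) y = A * (Y k * D j - Y j * D k)" for j
      using Ltil_ev[OF y F1s] unfolding Y_def D_def by (simp add: dL_scale algebra_simps)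
    have eu: "(\<Sum>j\<in>UNIV. Y j * D j) = of_nat l * ev L y"
      using euler[of l L y] h unfolding harm_def Y_def D_def by simp
    have s1: "(\<Sum>j\<in>UNIV. Y j * Y j) = 1" using sum_sq_sphere[OF y] unfolding Y_def .
    have "(\<Sum>j\<in>UNIV. (- \<i> * Y j) * (- \<i> * complex_of_real hbar * Ltil k j (opMinv f) y))
        = - complex_of_real hbar * A * (Y k * (\<Sum>j\<in>UNIV. Y j * D j) - (\<Sum>j\<in>UNIV. Y j * Y j) * D k)"
    proof -
      have "(- \<i> * Y j) * (- \<i> * complex_of_real hbar * Ltil k j (opMinv f) y)
          = - complex_of_real hbar * A * (Y k * (Y j * D j) - (Y j * Y j) * D k)" for j
        unfolding Lt by (simp add: algebra_simps)
      then have "(\<Sum>j\<in>UNIV. (- \<i> * Y j) * (- \<i> * complex_of_real hbar * Ltil k j (opMinv f) y))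
          = - complex_of_real hbar * A * (\<Sum>j\<in>UNIV. Y k * (Y j * D j) - (Y j * Y j) * D k)"
        by (simp add: sum_distrib_left)
      also have "(\<Sum>j\<in>UNIV. Y k * (Y j * D j) - (Y j * Y j) * D k) = Y k * (\<Sum>j\<in>UNIV. Y j * D j) - (\<Sum>j\<in>UNIV. Y j * Y j) * D k"
        by (simp add: sum_subtractf sum_distrib_left sum_distrib_right)
      finally show ?thesis .
    qed
    also have "\<dots> = - complex_of_real hbar * A * (Y k * of_nat l * ev L y - D k)"
      unfolding eu s1 by simp
    finally have S: "(\<Sum>j\<in>UNIV. (- \<i> * Y j) * (- \<i> * complex_of_real hbar * Ltil k j (opMinv f) y))
        = - complex_of_real hbar * A * (Y k * of_nat l * ev L y - D k)" .
    have "opN hbar (opMinv f) y = complex_of_real hbar * of_nat l * A * ev L y"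
      using y unfolding opN by (simp add: restr_def)
    then have "opE hbar k (opMinv f) y = complex_of_real hbar * A * D k"
      unfolding opE_def Y_def[symmetric] S by (simp add: algebra_simps)
    then show ?thesis unfolding D_def by simp
  qed
  have hE: "harm (l - 1) (scale (complex_of_real hbar * A) (dL k L))"
    by (rule harm_scale[OF harm_dL[OF h]])
  have hc3: "harm_comp (opE hbar k (opMinv f)) = (\<lambda>i. if i = l - 1 then restr (ev (scale (complex_of_real hbar * A) (dL k L))) else (\<lambda>_. 0))"
    by (rule harm_comp_eq[OF N2 hE E])
  have "opA hbar k f = (\<lambda>y. complex_of_real b * restr (ev (scale (complex_of_real hbar * A) (dL k L))) y)"
    unfolding opA_def opM_def fcalc_eq[OF hc3] b_def nn_def ..
  then show ?thesis unfolding restr_scale A_def a_def b_def nn_def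
    by (simp add: algebra_simps fun_eq_iff)
qed



definition ulist :: "'m::finite list" where "ulist = (SOME xs. set xs = UNIV \<and> distinct xs)"

lemma ulist: "set (ulist :: 'm::finite list) = UNIV" "distinct (ulist :: 'm list)"
proof -
  have "\<exists>xs. set xs = (UNIV :: 'm set) \<and> distinct xs" using finite_distinct_list[of "UNIV :: 'm set"] by auto
  then have "set (ulist :: 'm list) = UNIV \<and> distinct (ulist :: 'm list)" unfolding ulist_def by (rule someI_ex)
  then show "set (ulist :: 'm::finite list) = UNIV" "distinct (ulist :: 'm list)" by auto
qed

definition delta :: "'m \<Rightarrow> 'm \<Rightarrow> nat" where "delta j = (\<lambda>i. if i = j then 1 else 0)"

definition lin :: "complex^'m::finite \<Rightarrow> (complex \<times> ('m \<Rightarrow> nat)) list" where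
  "lin alpha = map (\<lambda>j. (alpha$j, delta j)) ulist"

definition pmul :: "(complex \<times> ('m::finite \<Rightarrow> nat)) list \<Rightarrow> (complex \<times> ('m \<Rightarrow> nat)) list \<Rightarrow> (complex \<times> ('m \<Rightarrow> nat)) list" where
  "pmul A B = concat (map (\<lambda>(a,m). map (\<lambda>(b,m'). (a*b, \<lambda>i. m i + m' i)) B) A)"

fun powL :: "complex^'m::finite \<Rightarrow> nat \<Rightarrow> (complex \<times> ('m \<Rightarrow> nat)) list" where
  "powL alpha 0 = [(1, \<lambda>_. 0)]"
| "powL alpha (Suc l) = pmul (lin alpha) (powL alpha l)"

lemma mono_zero[simp]: "mono (\<lambda>_. 0) y = 1" by (simp add: mono_def)

lemma mono_delta: "mono (delta j) y = complex_of_real (y$j)"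
proof -
  have "mono (delta j) y = (\<Prod>i\<in>UNIV. if i = j then complex_of_real (y$j) else 1)"
    unfolding mono_def delta_def by (intro prod.cong) auto
  then show ?thesis by simp
qed

lemma mono_add: "mono (\<lambda>i. m i + m' i) y = mono m y * mono m' y"
  unfolding mono_def by (simp add: power_add prod.distrib)

lemma ev_pmul: "ev (pmul A B) y = ev A y * ev B y"
proof (induction A)
  case (Cons a A)
  obtain c m where a: "a = (c,m)" by fastforce
  have "ev (map (\<lambda>(b,m'). (c*b, \<lambda>i. m i + m' i)) B) y = c * mono m y * ev B y"
    by (induction B) (auto simp: mono_add algebra_simps)
  then show ?case using Cons a by (simp add: pmul_def algebra_simps)
qed (simp add: pmul_def)

lemma deg_pmul: "deg a A \<Longrightarrow> deg b B \<Longrightarrow> deg (a + b) (pmul A B)"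
  unfolding deg_def pmul_def by (fastforce simp: sum.distrib)

lemma ev_lin:
  fixes alpha :: "complex^'m::finite"
  shows "ev (lin alpha) y = (\<Sum>j\<in>UNIV. alpha$j * complex_of_real (y$j))"
proof -
  have "ev (lin alpha) y = (\<Sum>j\<leftarrow>ulist. alpha$j * complex_of_real (y$j))"
    unfolding lin_def ev_def by (simp add: o_def mono_delta)
  then show ?thesis using sum_list_distinct_conv_sum_set[OF ulist(2), of "\<lambda>j. alpha$j * complex_of_real (y$j)"]
    by (simp add: ulist(1))
qed

lemma deg_lin:
  fixes alpha :: "complex^'m::finite"
  shows "deg 1 (lin alpha)"
proof -
  have "sum (delta j) UNIV = 1" for j :: 'm unfolding delta_def by (simp add: sum.delta)
  then show ?thesis unfolding deg_def lin_def by auto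
qed

lemma dL_lin:
  fixes alpha :: "complex^'m::finite"
  shows "ev (dL k (lin alpha)) y = alpha$k"
proof -
  have dl: "dL k [(alpha$j, delta j)] = (if j = k then [(alpha$k, \<lambda>_. 0)] else [])" for j
  proof -
    have "(delta k)(k := 0) = (\<lambda>_. 0)" by (auto simp: delta_def)
    then show ?thesis by (auto simp: delta_def)
  qed
  have "dL k (lin alpha) = concat (map (\<lambda>j. dL k [(alpha$j, delta j)]) ulist)"
    unfolding lin_def dL_def by (simp add: o_def)
  then have "ev (dL k (lin alpha)) y = (\<Sum>j\<leftarrow>ulist. ev (dL k [(alpha$j, delta j)]) y)"
    using ev_concat[of "\<lambda>j. dL k [(alpha$j, delta j)]" ulist y] by simp
  also have "\<dots> = (\<Sum>j\<in>UNIV. ev (dL k [(alpha$j, delta j)]) y)"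
    using sum_list_distinct_conv_sum_set[OF ulist(2), of "\<lambda>j. ev (dL k [(alpha$j, delta j)]) y"] by (simp add: ulist(1))
  also have "\<dots> = alpha$k"
  proof -
    have "ev (dL k [(alpha$j, delta j)]) y = (if j = k then alpha$k else 0)" for j unfolding dl by simp
    then show ?thesis by simp
  qed
  finally show ?thesis .
qed

lemma ev_powL: "ev (powL alpha l) y = (ev (lin alpha) y) ^ l"
  by (induction l) (auto simp: ev_pmul)

lemma deg_powL: "deg l (powL alpha l)"
proof (induction l)
  case 0 then show ?case by (simp add: deg_def)
next
  case (Suc l) then show ?case using deg_pmul[OF deg_lin Suc] by simp
qed

lemma dpow: "ev (dL i (powL alpha l)) y = of_nat l * alpha$i * ev (powL alpha (l - 1)) y"
proof -
  have fe: "ev (powL alpha l) = (\<lambda>z. (ev (lin alpha) z) ^ l)" using ev_powL by auto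
  have d: "((\<lambda>t. ev (lin alpha) (y + t *\<^sub>R axis i 1)) has_derivative (\<lambda>h. h *\<^sub>R alpha$i)) (at 0)"
    using ev_line[of "lin alpha" y i 0] unfolding has_vector_derivative_def dL_lin by simp
  have "((\<lambda>t. (ev (lin alpha) (y + t *\<^sub>R axis i 1)) ^ l) has_derivative
      (\<lambda>h. of_nat l * (h *\<^sub>R alpha$i) * (ev (lin alpha) (y + 0 *\<^sub>R axis i 1)) ^ (l - 1))) (at 0)"
    by (rule has_derivative_power[OF d])
  moreover have "(\<lambda>h. of_nat l * (h *\<^sub>R alpha$i) * (ev (lin alpha) (y + 0 *\<^sub>R axis i 1)) ^ (l - 1))
     = (\<lambda>h. h *\<^sub>R (of_nat l * alpha$i * (ev (lin alpha) y) ^ (l - 1)))"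
    by (auto simp: scaleR_conv_of_real algebra_simps intro!: ext)
  ultimately have "((\<lambda>t. (ev (lin alpha) (y + t *\<^sub>R axis i 1)) ^ l) has_vector_derivative
      (of_nat l * alpha$i * (ev (lin alpha) y) ^ (l - 1))) (at 0)"
    unfolding has_vector_derivative_def by simp
  then have "pd (ev (powL alpha l)) i y = of_nat l * alpha$i * (ev (lin alpha) y) ^ (l - 1)"
    unfolding pd_def fe by (rule vector_derivative_at)
  then show ?thesis unfolding pd_ev ev_powL .
qed

lemma harm_powL:
  assumes iso: "(\<Sum>j\<in>UNIV. (alpha$j)\<^sup>2) = 0"
  shows "harm l (powL alpha l)"
proof -
  have "ev (dL i (dL i (powL alpha l))) y = of_nat l * of_nat (l - 1) * (alpha$i)\<^sup>2 * ev (powL alpha (l - 1 - 1)) y" for i y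
  proof -
    have "ev (dL i (dL i (powL alpha l))) y = ev (dL i (scale (of_nat l * alpha$i) (powL alpha (l - 1)))) y"
      by (rule ev_fun_eq_dL) (simp add: dpow)
    then show ?thesis by (simp add: dL_scale dpow power2_eq_square algebra_simps)
  qed
  then have "(\<Sum>i\<in>UNIV. ev (dL i (dL i (powL alpha l))) y) = of_nat l * of_nat (l - 1) * (\<Sum>i\<in>UNIV. (alpha$i)\<^sup>2) * ev (powL alpha (l - 1 - 1)) y" for y
    by (simp add: sum_distrib_left sum_distrib_right algebra_simps)
  then show ?thesis using iso deg_powL unfolding harm_def by simp
qed

lemma dL_deg0: "deg 0 L \<Longrightarrow> dL k L = []"
  by (induction L) auto



lemma pw4: "(x::real) > 0 \<Longrightarrow> (x\<^sup>2) powr (1/4) = sqrt x"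
proof -
  assume x: "x > 0"
  have "x\<^sup>2 = x powr (real 2)" using powr_realpow[OF x, of 2] by simp
  then have "(x\<^sup>2) powr (1/4) = x powr (1/2)" by (simp add: powr_powr)
  then show ?thesis using powr_half_sqrt[of x] x by simp
qed

lemma coefC:
  fixes nn :: real and l :: nat
  assumes nn: "nn \<ge> 2" and l: "l \<ge> 1"
  shows "sqrt (2 / (nn - 1)) * ((real (l - 1) + (nn - 1) / 2)\<^sup>2) powr (1/4)
       * (1 / (sqrt (2 / (nn - 1)) * ((real l + (nn - 1) / 2)\<^sup>2) powr (1/4)))
     = sqrt ((2 * (real l - 1) + nn - 1) / (2 * real l + nn - 1))"
proof -
  have p1: "real (l - 1) + (nn - 1) / 2 > 0"
  proof -
    have "real (l - 1) \<ge> 0" by simp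
    moreover have "(nn - 1) / 2 > 0" using nn by simp
    ultimately show ?thesis by (rule add_nonneg_pos)
  qed
  have p2: "real l + (nn - 1) / 2 > 0"
  proof -
    have "real l \<ge> 0" by simp
    moreover have "(nn - 1) / 2 > 0" using nn by simp
    ultimately show ?thesis by (rule add_nonneg_pos)
  qed
  have s: "sqrt (2 / (nn - 1)) > 0" using nn by simp
  have "sqrt (2 / (nn - 1)) * ((real (l - 1) + (nn - 1) / 2)\<^sup>2) powr (1/4)
       * (1 / (sqrt (2 / (nn - 1)) * ((real l + (nn - 1) / 2)\<^sup>2) powr (1/4)))
     = sqrt (real (l - 1) + (nn - 1) / 2) / sqrt (real l + (nn - 1) / 2)"
    unfolding pw4[OF p1] pw4[OF p2] using s by (simp add: field_simps)
  also have "\<dots> = sqrt ((real (l - 1) + (nn - 1) / 2) / (real l + (nn - 1) / 2))"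
    by (simp add: real_sqrt_divide)
  also have "(real (l - 1) + (nn - 1) / 2) / (real l + (nn - 1) / 2) = (2 * (real l - 1) + nn - 1) / (2 * real l + nn - 1)"
    using l p2 by (simp add: field_simps of_nat_diff)
  finally show ?thesis .
qed

theorem mainTheorem13:
  fixes alpha :: "complex^'m::finite" and hbar :: real and k :: 'm
  assumes "CARD('m) - 1 \<in> {2, 3, 5}"
    and "hbar > 0"
    and "(\<Sum>j\<in>UNIV. (alpha$j)\<^sup>2) = 0"
  shows "(\<forall>l::nat. l \<ge> 1 \<longrightarrow> (\<forall>y::real^'m. norm y = 1 \<longrightarrow>
            opA hbar k (\<lambda>x. (\<Sum>j\<in>UNIV. alpha$j * complex_of_real (x$j)) ^ l) y =
            complex_of_real (hbar * real l *
              sqrt ((2 * (real l - 1) + dimS TYPE('m) - 1) / (2 * real l + dimS TYPE('m) - 1))) *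
            alpha$k * (\<Sum>j\<in>UNIV. alpha$j * complex_of_real (y$j)) ^ (l - 1)))
       \<and> (\<forall>c::complex. \<forall>y::real^'m. norm y = 1 \<longrightarrow> opA hbar k (\<lambda>x. c) y = 0)
       \<and> (\<forall>l::nat. l > 0 \<longrightarrow> (\<forall>f\<in>(SH l :: (real^'m \<Rightarrow> complex) set). opA hbar k f \<in> SH (l - 1)))
       \<and> (\<forall>f\<in>(SH 0 :: (real^'m \<Rightarrow> complex) set). \<forall>y. norm y = 1 \<longrightarrow> opA hbar k f y = 0)"
proof -
  have N: "CARD('m) \<ge> 3" using assms(1) by auto
  have nn: "dimS TYPE('m) \<ge> 2" using N unfolding dimS_def by simp
  define C where "C l = hbar * (sqrt (2 / (dimS TYPE('m) - 1)) * ((real (l - 1) + (dimS TYPE('m) - 1) / 2)\<^sup>2) powr (1/4))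
       * (1 / (sqrt (2 / (dimS TYPE('m) - 1)) * ((real l + (dimS TYPE('m) - 1) / 2)\<^sup>2) powr (1/4)))" for l :: nat
  have oA: "opA hbar k f = (\<lambda>y. complex_of_real (C l) * restr (ev (dL k L)) y)"
    if "harm l L" "\<And>z. norm z = 1 \<Longrightarrow> f z = ev L z" for l L and f :: "real^'m \<Rightarrow> complex"
    unfolding C_def by (rule opA_harm[OF N that])
  have c1: "\<forall>l::nat. l \<ge> 1 \<longrightarrow> (\<forall>y::real^'m. norm y = 1 \<longrightarrow>
            opA hbar k (\<lambda>x. (\<Sum>j\<in>UNIV. alpha$j * complex_of_real (x$j)) ^ l) y =
            complex_of_real (hbar * real l *
              sqrt ((2 * (real l - 1) + dimS TYPE('m) - 1) / (2 * real l + dimS TYPE('m) - 1))) *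
            alpha$k * (\<Sum>j\<in>UNIV. alpha$j * complex_of_real (y$j)) ^ (l - 1))"
  proof (intro allI impI)
    fix l :: nat and y :: "real^'m" assume l: "l \<ge> 1" and y: "norm y = 1"
    have h: "harm l (powL alpha l)" by (rule harm_powL[OF assms(3)])
    have "opA hbar k (\<lambda>x. (\<Sum>j\<in>UNIV. alpha$j * complex_of_real (x$j)) ^ l) =
        (\<lambda>y. complex_of_real (C l) * restr (ev (dL k (powL alpha l))) y)"
      by (rule oA[OF h]) (simp add: ev_powL ev_lin)
    then have "opA hbar k (\<lambda>x. (\<Sum>j\<in>UNIV. alpha$j * complex_of_real (x$j)) ^ l) y
       = complex_of_real (C l) * (of_nat l * alpha$k * (\<Sum>j\<in>UNIV. alpha$j * complex_of_real (y$j)) ^ (l - 1))"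
      using y by (simp add: restr_def dpow ev_powL ev_lin)
    moreover have "C l = hbar * sqrt ((2 * (real l - 1) + dimS TYPE('m) - 1) / (2 * real l + dimS TYPE('m) - 1))"
      unfolding C_def mult.assoc[of hbar] coefC[OF nn l] ..
    ultimately show "opA hbar k (\<lambda>x. (\<Sum>j\<in>UNIV. alpha$j * complex_of_real (x$j)) ^ l) y =
            complex_of_real (hbar * real l *
              sqrt ((2 * (real l - 1) + dimS TYPE('m) - 1) / (2 * real l + dimS TYPE('m) - 1))) *
            alpha$k * (\<Sum>j\<in>UNIV. alpha$j * complex_of_real (y$j)) ^ (l - 1)"
      by (simp add: algebra_simps)
  qed
  have c2: "\<forall>c::complex. \<forall>y::real^'m. norm y = 1 \<longrightarrow> opA hbar k (\<lambda>x. c) y = 0"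
  proof (intro allI impI)
    fix c :: complex and y :: "real^'m" assume y: "norm y = 1"
    define L :: "(complex \<times> ('m \<Rightarrow> nat)) list" where "L = [(c, \<lambda>_. 0)]"
    have h: "harm 0 L" unfolding L_def harm_def by simp
    have "opA hbar k (\<lambda>x. c) = (\<lambda>y. complex_of_real (C 0) * restr (ev (dL k L)) y)"
      by (rule oA[OF h]) (simp add: L_def)
    then show "opA hbar k (\<lambda>x. c) y = 0" by (simp add: L_def restr_def)
  qed
  have c3: "\<forall>l::nat. l > 0 \<longrightarrow> (\<forall>f\<in>(SH l :: (real^'m \<Rightarrow> complex) set). opA hbar k f \<in> SH (l - 1))"
  proof (intro allI impI ballI)
    fix l :: nat and f :: "real^'m \<Rightarrow> complex" assume "l > 0" "f \<in> SH l"
    then obtain L where L: "harm l L" "f = restr (ev L)" using SH_iff by blast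
    have "opA hbar k f = (\<lambda>y. complex_of_real (C l) * restr (ev (dL k L)) y)"
      by (rule oA[OF L(1)]) (simp add: L(2) restr_def)
    also have "\<dots> = restr (ev (scale (complex_of_real (C l)) (dL k L)))"
      by (simp add: restr_scale fun_eq_iff)
    finally show "opA hbar k f \<in> SH (l - 1)"
      unfolding SH_iff using harm_scale[OF harm_dL[OF L(1)]] by blast
  qed
  have c4: "\<forall>f\<in>(SH 0 :: (real^'m \<Rightarrow> complex) set). \<forall>y. norm y = 1 \<longrightarrow> opA hbar k f y = 0"
  proof (intro allI impI ballI)
    fix f :: "real^'m \<Rightarrow> complex" and y :: "real^'m" assume "f \<in> SH 0" "norm y = 1"
    then obtain L where L: "harm 0 L" "f = restr (ev L)" using SH_iff by blast
    have "opA hbar k f = (\<lambda>y. complex_of_real (C 0) * restr (ev (dL k L)) y)"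
      by (rule oA[OF L(1)]) (simp add: L(2) restr_def)
    moreover have "dL k L = []" using L(1) dL_deg0 unfolding harm_def by blast
    ultimately show "opA hbar k f y = 0" by (simp add: restr_def)
  qed
  show ?thesis using c1 c2 c3 c4 by blast
qed

end
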